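(* Let $u\in\mathbb{R}$, $q=Q_v(u)$, $r=\mathcal{S}(U(u))$, $e=u-\sup\{T_n^0:T_n^0\le u\}$, $z^+=(q,r,e)$ and $z^-=(0,0,e)$. Then for all $t\ge u$, \[ Q_u(t-u;z^-)\le Q_u(t-u;z^+)\le Q_v(t).\]
   Context: Let $c\ge1$. Let $G,F$ be CDFs of strictly positive random variables $A$ (interarrival) and $V$ (service), $\lambda=1/E[A]$, $\mu=1/E[V]$, $\lambda<c\mu$. Let $\mathcal{T}^0=\{T_n^0:n\in\mathbb{Z}\setminus\{0\}\}$ be a time-stationary renewal point process with inter-renewal CDF $G$, indexed $\dots<T_{-1}^0<0<T_1^0<\dots$. Let $\mathcal{T}^i=\{T_n^i\}$, $i=1,\dots,c$, be i.i.d. time-stationary renewal processes with inter-renewal CDF $F$, independent of $\mathcal{T}^0$; $V_k^i=T_k^{i,+}-T_k^i$ where $T_k^{i,+}$ is the next point after $T_k^i$. $U^i(t)=\inf\{T_n^i:T_n^i>t\}-t$, $U(t)=(U^1(t),\dots,U^c(t))$; $\mathcal{S}$ sorts ascending. Vacation system: customers arrive at the points of $\mathcal{T}^0$ and wait in a FCFS queue; at each point $T_k^i$, if the queue is nonempty just before, the head customer leaves the queue and is served by server $i$ for time $V_k^i$, otherwise server $i$ takes a vacation of length $V_k^i$. Its stationary number waiting in queue is $Q_v(t)=\sup_{s\le t}\big(|(s,t]\cap\mathcal{T}^0|-\sum_{i=1}^c|(s,t]\cap\mathcal{T}^i|\big)$. The customer arriving at $T_n^0$ leaves this queue at some point $T_k^{i(n)}$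 and is assigned service time $V_n:=V_k^{i(n)}$. For $u\in\mathbb{R}$ and $z=(q,r,e)$ ($q\in\mathbb{Z}_{\ge0}$, $r\in\mathbb{R}_{\ge0}^c$ ascending, $e\ge0$), $Q_u(t;z)$, $t\ge0$, is the number of customers waiting in queue at time $u+t$ in a FCFS $c$-server queue which at time $u$ has $q$ customers waiting, sorted remaining service times $r$ at the servers and time $e$ since the last arrival, and which is fed by the customers arriving at $T_n^0\in(u,u+t]$ with service times $V_n$. *)

theory Defs
  imports Complex_Main
begin

text \<open>Arrival epochs: a set T0 of reals (points of the arrival process).
  Service epochs of server i (i in 1..c): a set S i of reals.\<close>

definition loc_finite :: "real set \<Rightarrow> bool" where
  "loc_finite X \<longleftrightarrow> (\<forall>a b. finite (X \<inter> {a..b}))"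

definition unbounded_both :: "real set \<Rightarrow> bool" where
  "unbounded_both X \<longleftrightarrow> (\<forall>x. (\<exists>y\<in>X. x < y) \<and> (\<exists>y\<in>X. y < x))"

definition cnt :: "real set \<Rightarrow> real \<Rightarrow> real \<Rightarrow> int" where
  "cnt X s t = int (card (X \<inter> {s<..t}))"

definition cnt_open :: "real set \<Rightarrow> real \<Rightarrow> real \<Rightarrow> int" where
  "cnt_open X s t = int (card (X \<inter> {s<..<t}))"

definition Sall :: "nat \<Rightarrow> (nat \<Rightarrow> real set) \<Rightarrow> real set" where
  "Sall c S = (\<Union>i\<in>{1..c}. S i)"

definition Qv_set :: "nat \<Rightarrow> real set \<Rightarrow> (nat \<Rightarrow> real set) \<Rightarrow> real \<Rightarrow> int set" where
  "Qv_set c T0 S t = {cnt T0 s t - (\<Sum>i\<in>{1..c}. cnt (S i) s t) | s. s \<le> t}"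

definition Qv :: "nat \<Rightarrow> real set \<Rightarrow> (nat \<Rightarrow> real set) \<Rightarrow> real \<Rightarrow> int" where
  "Qv c T0 S t = Sup (Qv_set c T0 S t)"

text \<open>Left limit Q_v(t-): the number waiting just before time t.\<close>
definition Qv_left :: "nat \<Rightarrow> real set \<Rightarrow> (nat \<Rightarrow> real set) \<Rightarrow> real \<Rightarrow> int" where
  "Qv_left c T0 S t =
     Sup {cnt_open T0 s t - (\<Sum>i\<in>{1..c}. cnt_open (S i) s t) | s. s \<le> t}"

definition nextpt :: "real set \<Rightarrow> real \<Rightarrow> real" where
  "nextpt X x = Inf {y\<in>X. x < y}"

definition resid :: "real set \<Rightarrow> real \<Rightarrow> real" where
  "resid X t = nextpt X t - t"

text \<open>Service epochs at which a customer leaves the vacation queue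
  (the queue was nonempty just before).\<close>
definition busy_epoch :: "nat \<Rightarrow> real set \<Rightarrow> (nat \<Rightarrow> real set) \<Rightarrow> real \<Rightarrow> bool" where
  "busy_epoch c T0 S x \<longleftrightarrow> x \<in> Sall c S \<and> Qv_left c T0 S x \<ge> 1"

text \<open>FCFS: the customer arriving at a finds Q_v(a-) customers ahead of it and
  leaves the queue at the (Q_v(a-)+1)-th busy service epoch after a.\<close>
definition dep_epoch :: "nat \<Rightarrow> real set \<Rightarrow> (nat \<Rightarrow> real set) \<Rightarrow> real \<Rightarrow> real" where
  "dep_epoch c T0 S a =
     (THE x. a < x \<and> busy_epoch c T0 S x \<and>
        card {y. a < y \<and> y \<le> x \<and> busy_epoch c T0 S y} = nat (Qv_left c T0 S a) + 1)"

text \<open>Service time V_n of the customer arriving at a: if it leaves the queue at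
  the point x = T_k^i of server i, then V_n = V_k^i = (next point of T^i after x) - x.\<close>
definition svc_time :: "nat \<Rightarrow> real set \<Rightarrow> (nat \<Rightarrow> real set) \<Rightarrow> real \<Rightarrow> real" where
  "svc_time c T0 S a =
     (let x = dep_epoch c T0 S a; i = (THE i. i \<in> {1..c} \<and> x \<in> S i)
      in nextpt (S i) x - x)"

text \<open>Start-of-service times of customers (arrival, service time) served in
  FCFS order by c servers whose (sorted) free-times are W.\<close>
fun fcfs_starts :: "real list \<Rightarrow> (real \<times> real) list \<Rightarrow> real list" where
  "fcfs_starts W [] = []"
| "fcfs_starts W ((a, v) # cs) =
     (let s = max a (hd W) in s # fcfs_starts (insort (s + v) (tl W)) cs)"

text \<open>Q_u(t; z) with z = (q, r, e): number waiting at time u+t in the FCFS c-server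
  queue which at time u has q customers waiting (the q latest arrivals at or
  before u, with their service times V_n), servers with sorted remaining service
  times r (server j becomes free at u + r_j), time e since last arrival, fed by the
  customers arriving at points of T0 in (u, u+t] with service times V_n.\<close>
definition Qu :: "nat \<Rightarrow> real set \<Rightarrow> (nat \<Rightarrow> real set) \<Rightarrow> real \<Rightarrow> real
                  \<Rightarrow> nat \<times> real list \<times> real \<Rightarrow> nat" where
  "Qu c T0 S u t z =
     (case z of (q, r, e) \<Rightarrow>
       let waiting = sorted_list_of_set {a \<in> T0. a \<le> u \<and> card (T0 \<inter> {a..u}) \<le> q};
           arriving = sorted_list_of_set (T0 \<inter> {u<..u+t});
           cs = map (\<lambda>a. (u, svc_time c T0 S a)) waiting
                @ map (\<lambda>a. (a, svc_time c T0 S a)) arriving;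
           starts = fcfs_starts (map (\<lambda>x. u + x) r) cs
       in length (filter (\<lambda>s. u + t < s) starts))"

end

theory Submission
  imports Defs
begin


definition cg :: "real \<Rightarrow> real list \<Rightarrow> nat" where
  "cg x W = length (filter (\<lambda>w. x < w) W)"

lemma cg_insort: "cg x (insort y L) = cg x L + (if x < y then 1 else 0)"
  unfolding cg_def by (induction L) auto

lemma cg_le_len: "cg x L \<le> length L"
  unfolding cg_def by simp

lemma cg_Cons: "cg x (h # t) = cg x t + (if x < h then 1 else 0)"
  unfolding cg_def by simp

lemma cg_all: "\<forall>w\<in>set L. x < w \<Longrightarrow> cg x L = length L"
  unfolding cg_def by (simp add: filter_True)

lemma list_all2_cnt:
  "list_all2 (\<le>) xs (ys::real list) \<Longrightarrow> length (filter (\<lambda>s. t < s) xs) \<le> length (filter (\<lambda>s. t < s) ys)"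
  by (induction rule: list_all2_induct) auto

lemma fcfs_length: "W \<noteq> [] \<Longrightarrow> length (fcfs_starts W cs) = length cs"
  by (induction cs arbitrary: W) (auto simp: Let_def)

lemma fcfs_mono:
  "sorted W \<Longrightarrow> sorted W' \<Longrightarrow> length W = length W' \<Longrightarrow> W \<noteq> [] \<Longrightarrow>
   (\<forall>x. cg x W \<le> cg x W') \<Longrightarrow> (\<forall>p\<in>set cs. snd p \<ge> 0) \<Longrightarrow>
   list_all2 (\<le>) (fcfs_starts W cs) (fcfs_starts W' cs)"
proof (induction cs arbitrary: W W')
  case Nil then show ?case by simp
next
  case (Cons p cs)
  obtain a v where p: "p = (a, v)" by (cases p)
  obtain h t where W: "W = h # t" using Cons.prems(4) by (cases W) auto
  obtain h' t' where W': "W' = h' # t'" using Cons.prems(3,4) by (cases W') auto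
  have v0: "v \<ge> 0" using Cons.prems(6) p by auto
  have st: "\<forall>y\<in>set t. h \<le> y" using Cons.prems(1) W by simp
  have st': "\<forall>y\<in>set t'. h' \<le> y" using Cons.prems(2) W' by simp
  have hh: "h \<le> h'"
  proof (rule ccontr)
    assume "\<not> h \<le> h'"
    then have "cg h' W = length W" using st W by (intro cg_all) auto
    moreover have "cg h' W' < length W'"
      unfolding cg_def W' by (simp add: le_imp_less_Suc)
    ultimately show False using Cons.prems(3,5) by (metis not_le)
  qed
  define s where "s = max a h"
  define s' where "s' = max a h'"
  have ss: "s \<le> s'" using hh s_def s'_def by auto
  define W1 where "W1 = insort (s + v) t"
  define W1' where "W1' = insort (s' + v) t'"
  have eq: "fcfs_starts W (p # cs) = s # fcfs_starts W1 cs"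
    "fcfs_starts W' (p # cs) = s' # fcfs_starts W1' cs"
    using W W' p s_def s'_def W1_def W1'_def by (simp_all add: Let_def)
  have len: "length W1 = length W1'" using Cons.prems(3) W W' W1_def W1'_def
    by (simp add: length_insort)
  have c1: "cg x W1 \<le> cg x W1'" for x
  proof (cases "x < h'")
    case True
    have "cg x W' = length W'" using True st' W' by (intro cg_all) auto
    then have "cg x t' = length t'" using W' cg_Cons[of x h' t'] True cg_le_len[of x t'] by simp
    moreover have "x < s' + v" using True v0 s'_def by auto
    ultimately have "cg x W1' = length W1'" using W1'_def cg_insort by (simp add: length_insort)
    then show ?thesis using len cg_le_len[of x W1] by simp
  next
    case False
    then have "\<not> x < h" using hh by auto
    then have "cg x W1 = cg x W + (if x < s + v then 1 else 0)"
      using W W1_def cg_insort cg_Cons by simp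
    moreover have "cg x W1' = cg x W' + (if x < s' + v then 1 else 0)"
      using W' W1'_def cg_insort cg_Cons False by simp
    ultimately show ?thesis using Cons.prems(5)[rule_format, of x] ss by auto
  qed
  have "list_all2 (\<le>) (fcfs_starts W1 cs) (fcfs_starts W1' cs)"
    apply (rule Cons.IH)
    using Cons.prems W W' W1_def W1'_def len c1 by (auto simp: sorted_insort)
  then show ?case using eq ss by simp
qed

fun fcfs_state :: "real list \<Rightarrow> (real \<times> real) list \<Rightarrow> real list" where
  "fcfs_state W [] = W"
| "fcfs_state W ((a, v) # cs) = fcfs_state (insort (max a (hd W) + v) (tl W)) cs"

lemma fcfs_append: "fcfs_starts W (xs @ ys) = fcfs_starts W xs @ fcfs_starts (fcfs_state W xs) ys"
  by (induction W xs rule: fcfs_state.induct) (auto simp: Let_def)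

lemma fcfs_state_inv:
  "W \<noteq> [] \<Longrightarrow> sorted W \<Longrightarrow> (\<forall>w\<in>set W. u \<le> w) \<Longrightarrow> (\<forall>p\<in>set cs. u \<le> fst p \<and> 0 \<le> snd p) \<Longrightarrow>
   sorted (fcfs_state W cs) \<and> length (fcfs_state W cs) = length W \<and> (\<forall>w\<in>set (fcfs_state W cs). u \<le> w)"
proof (induction W cs rule: fcfs_state.induct)
  case (1 W) then show ?case by simp
next
  case (2 W a v cs)
  obtain h t where W: "W = h # t" using "2.prems"(1) by (cases W) auto
  have "sorted (insort (max a h + v) t) \<and> length (insort (max a h + v) t) = length W
      \<and> (\<forall>w\<in>set (insort (max a h + v) t). u \<le> w)"
    using "2.prems" W by (auto simp: sorted_insort length_insort set_insort_key)
  then show ?case using "2.IH" "2.prems" W by (auto simp: length_insort)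
qed

lemma fcfs_G2:
  fixes N :: "nat \<Rightarrow> real \<Rightarrow> real" and Sv :: "nat \<Rightarrow> real set"
    and b dd vv :: "'a \<Rightarrow> real" and ii :: "'a \<Rightarrow> nat"
  assumes c1: "c \<ge> 1"
    and Ngt: "\<forall>i\<in>{1..c}. \<forall>x. x < N i x"
    and Nmin: "\<forall>i\<in>{1..c}. \<forall>x y. y \<in> Sv i \<longrightarrow> x < y \<longrightarrow> N i x \<le> y"
    and Nmono: "\<forall>i\<in>{1..c}. \<forall>x y. x \<le> y \<longrightarrow> N i x \<le> N i y"
  shows "sorted W \<Longrightarrow> length W = c \<Longrightarrow> (\<forall>x. cg x W \<le> cg x (map (\<lambda>i. N i D) [1..<c+1])) \<Longrightarrow>
    sorted_wrt (<) (D # map dd as) \<Longrightarrow>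
    (\<forall>a\<in>set as. b a \<le> dd a \<and> ii a \<in> {1..c} \<and> dd a \<in> Sv (ii a) \<and> vv a = N (ii a) (dd a) - dd a) \<Longrightarrow>
    list_all2 (\<le>) (fcfs_starts W (map (\<lambda>a. (b a, vv a)) as)) (map dd as)"
proof (induction as arbitrary: W D)
  case Nil then show ?case by simp
next
  case (Cons a as)
  obtain h t where W: "W = h # t" using Cons.prems(2) c1 by (cases W) auto
  define d where "d = dd a"
  define i0 where "i0 = ii a"
  have i0: "i0 \<in> {1..c}" "d \<in> Sv i0" "b a \<le> d" "vv a = N i0 d - d"
    using Cons.prems(5) d_def i0_def by auto
  have Dd: "D < d" using Cons.prems(4) d_def by simp
  have cgP: "cg x (map f [1..<c+1]) = card {i\<in>{1..c}. x < f i}" for x f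
  proof -
    have "cg x (map f [1..<c+1]) = card ({i. x < f i} \<inter> set [1..<c+1])"
      unfolding cg_def by (simp add: filter_map distinct_length_filter o_def)
    also have "{i. x < f i} \<inter> set [1..<c+1] = {i\<in>{1..c}. x < f i}" by auto
    finally show ?thesis .
  qed
  have ND: "N i0 D \<le> d" using Nmin i0 Dd by auto
  have hd: "h \<le> d"
  proof (rule ccontr)
    assume "\<not> h \<le> d"
    then have "\<forall>w\<in>set W. d < w" using Cons.prems(1) W by auto
    then have "cg d W = c" using Cons.prems(2) by (simp add: cg_all)
    moreover have "card {i\<in>{1..c}. d < N i D} < c"
    proof -
      have "i0 \<in> {1..c}" "i0 \<notin> {i\<in>{1..c}. d < N i D}" using ND i0 by auto
      then have "{i\<in>{1..c}. d < N i D} \<subset> {1..c}" by blast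
      then show ?thesis by (metis card_atLeastAtMost diff_Suc_1 finite_atLeastAtMost psubset_card_mono)
    qed
    ultimately show False using Cons.prems(3)[rule_format, of d] cgP[of d "\<lambda>i. N i D"] by linarith
  qed
  define s where "s = max (b a) h"
  have sd: "s \<le> d" using hd i0 s_def by auto
  define W1 where "W1 = insort (s + vv a) t"
  have eq: "fcfs_starts W (map (\<lambda>a. (b a, vv a)) (a # as)) = s # fcfs_starts W1 (map (\<lambda>a. (b a, vv a)) as)"
    using W s_def W1_def by (simp add: Let_def)
  have len: "length W1 = c" using W W1_def Cons.prems(2) by (simp add: length_insort)
  have dom: "cg x W1 \<le> cg x (map (\<lambda>i. N i d) [1..<c+1])" for x
  proof (cases "x < d")
    case True
    have "cg x (map (\<lambda>i. N i d) [1..<c+1]) = c"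
      using Ngt True by (subst cg_all) (auto intro: less_trans)
    then show ?thesis using len cg_le_len[of x W1] by simp
  next
    case False
    have "cg x W1 = cg x t + (if x < s + vv a then 1 else 0)" using W1_def cg_insort by simp
    also have "\<dots> \<le> cg x W + (if x < N i0 d then 1 else 0)"
      using W cg_Cons[of x h t] sd i0 by auto
    also have "\<dots> \<le> card {i\<in>{1..c}. x < N i D} + (if x < N i0 d then 1 else 0)"
      using Cons.prems(3) cgP by simp
    also have "\<dots> \<le> card {i\<in>{1..c}. x < N i d}"
    proof -
      have sub: "{i\<in>{1..c}. x < N i D} \<subseteq> {i\<in>{1..c}. x < N i d} - {i0}"
        using Nmono Dd ND False by (auto intro: less_le_trans)
      show ?thesis
      proof (cases "x < N i0 d")
        case True
        then have mem: "i0 \<in> {i\<in>{1..c}. x < N i d}" using i0 by auto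
        have "card ({i\<in>{1..c}. x < N i d} - {i0}) + 1 = card {i\<in>{1..c}. x < N i d}"
          using card_Suc_Diff1[OF _ mem] by simp
        moreover have "card {i\<in>{1..c}. x < N i D} \<le> card ({i\<in>{1..c}. x < N i d} - {i0})"
          using sub by (intro card_mono) auto
        ultimately show ?thesis using True by simp
      next
        case False
        have "card {i\<in>{1..c}. x < N i D} \<le> card {i\<in>{1..c}. x < N i d}"
          using sub by (intro card_mono) auto
        then show ?thesis using False by simp
      qed
    qed
    finally show ?thesis using cgP by simp
  qed
  have "list_all2 (\<le>) (fcfs_starts W1 (map (\<lambda>a. (b a, vv a)) as)) (map dd as)"
    apply (rule Cons.IH)
    using Cons.prems W W1_def len dom d_def by (auto simp: sorted_insort)
  then show ?case using eq sd d_def by simp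
qed



lemma lf_fin: "loc_finite Y \<Longrightarrow> finite (Y \<inter> {s<..t})"
  unfolding loc_finite_def by (rule finite_subset[of _ "Y \<inter> {s..t}"]) auto

lemma lf_fin_o: "loc_finite Y \<Longrightarrow> finite (Y \<inter> {s<..<t})"
  unfolding loc_finite_def by (rule finite_subset[of _ "Y \<inter> {s..t}"]) auto

lemma lf_fin_c: "loc_finite Y \<Longrightarrow> finite (Y \<inter> {s..t})"
  unfolding loc_finite_def by auto

lemma cnt_split: "loc_finite Y \<Longrightarrow> s \<le> a \<Longrightarrow> a \<le> t \<Longrightarrow> cnt Y s t = cnt Y s a + cnt Y a t"
proof -
  assume lf: "loc_finite Y" and "s \<le> a" "a \<le> t"
  then have "Y \<inter> {s<..t} = (Y \<inter> {s<..a}) \<union> (Y \<inter> {a<..t})" by auto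
  moreover have "(Y \<inter> {s<..a}) \<inter> (Y \<inter> {a<..t}) = {}" by auto
  ultimately show ?thesis unfolding cnt_def using lf_fin[OF lf]
    by (simp add: card_Un_disjoint)
qed

lemma cnt_open_split: "loc_finite Y \<Longrightarrow> s \<le> a \<Longrightarrow> a < t \<Longrightarrow> cnt_open Y s t = cnt Y s a + cnt_open Y a t"
proof -
  assume lf: "loc_finite Y" and "s \<le> a" "a < t"
  then have "Y \<inter> {s<..<t} = (Y \<inter> {s<..a}) \<union> (Y \<inter> {a<..<t})" by auto
  moreover have "(Y \<inter> {s<..a}) \<inter> (Y \<inter> {a<..<t}) = {}" by auto
  ultimately show ?thesis unfolding cnt_def cnt_open_def using lf_fin[OF lf] lf_fin_o[OF lf]
    by (simp add: card_Un_disjoint)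
qed

lemma cnt_open_rel: "loc_finite Y \<Longrightarrow> s < t \<Longrightarrow> cnt Y s t = cnt_open Y s t + (if t \<in> Y then 1 else 0)"
proof -
  assume lf: "loc_finite Y" and st: "s < t"
  show ?thesis
  proof (cases "t \<in> Y")
    case True
    then have "Y \<inter> {s<..t} = insert t (Y \<inter> {s<..<t})" using st by auto
    then show ?thesis using True lf_fin_o[OF lf] unfolding cnt_def cnt_open_def by simp
  next
    case False
    then have "Y \<inter> {s<..t} = Y \<inter> {s<..<t}" by (auto simp: less_le)
    then show ?thesis using False unfolding cnt_def cnt_open_def by simp
  qed
qed

lemma cnt_self[simp]: "cnt Y t t = 0" unfolding cnt_def by simp
lemma cnt_open_self[simp]: "cnt_open Y t t = 0" unfolding cnt_open_def by simp
lemma cnt_nonneg: "0 \<le> cnt Y s t" unfolding cnt_def by simp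
lemma cnt_open_nonneg: "0 \<le> cnt_open Y s t" unfolding cnt_open_def by simp

lemma cnt_mono_left: "loc_finite Y \<Longrightarrow> s' \<le> s \<Longrightarrow> cnt Y s t \<le> cnt Y s' t"
  unfolding cnt_def using lf_fin by (auto intro!: card_mono)

lemma cnt_mono_right: "loc_finite Y \<Longrightarrow> t \<le> t' \<Longrightarrow> cnt Y s t \<le> cnt Y s t'"
  unfolding cnt_def using lf_fin by (auto intro!: card_mono)

lemma cnt_subset: "loc_finite Y \<Longrightarrow> Z \<subseteq> Y \<Longrightarrow> cnt Z s t \<le> cnt Y s t"
  unfolding cnt_def using lf_fin by (auto intro!: card_mono)

lemma cnt_open_le: "loc_finite Y \<Longrightarrow> cnt_open Y s t \<le> cnt Y s t"
  unfolding cnt_def cnt_open_def using lf_fin by (auto intro!: card_mono)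

lemma gap_exists: "loc_finite Y \<Longrightarrow> \<exists>s0<a. Y \<inter> {s0<..<a} = {}"
proof -
  assume lf: "loc_finite Y"
  define F where "F = {y\<in>Y. a - 1 \<le> y \<and> y < a}"
  have fin: "finite F" using lf_fin_c[OF lf, of "a-1" a] unfolding F_def
    by (rule finite_subset[rotated]) auto
  define s0 where "s0 = Max (insert (a - 1) F)"
  have "s0 < a" unfolding s0_def using fin by (subst Max_less_iff) (auto simp: F_def)
  moreover have "Y \<inter> {s0<..<a} = {}"
  proof (rule ccontr)
    assume "Y \<inter> {s0<..<a} \<noteq> {}"
    then obtain y where y: "y \<in> Y" "s0 < y" "y < a" by auto
    have "a - 1 \<le> s0" unfolding s0_def using fin by simp
    then have "y \<in> F" using y unfolding F_def by auto
    then have "y \<le> s0" unfolding s0_def using fin by simp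
    then show False using y by simp
  qed
  ultimately show ?thesis by blast
qed

lemma nextpt_props:
  assumes lf: "loc_finite Y" and ub: "unbounded_both Y"
  shows "nextpt Y x \<in> Y \<and> x < nextpt Y x \<and> (\<forall>y\<in>Y. x < y \<longrightarrow> nextpt Y x \<le> y)"
proof -
  obtain y0 where y0: "y0 \<in> Y" "x < y0" using ub unfolding unbounded_both_def by blast
  define F where "F = {y\<in>Y. x < y \<and> y \<le> y0}"
  have fin: "finite F" using lf_fin_c[OF lf, of x y0] unfolding F_def
    by (rule finite_subset[rotated]) auto
  have ne: "F \<noteq> {}" using y0 unfolding F_def by auto
  define m where "m = Min F"
  have mF: "m \<in> F" unfolding m_def using fin ne by simp
  have mle: "\<forall>y\<in>Y. x < y \<longrightarrow> m \<le> y"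
  proof (intro ballI impI)
    fix y assume "y \<in> Y" "x < y"
    show "m \<le> y"
    proof (cases "y \<le> y0")
      case True then have "y \<in> F" using \<open>y \<in> Y\<close> \<open>x < y\<close> unfolding F_def by auto
      then show ?thesis unfolding m_def using fin by simp
    next
      case False then show ?thesis using mF unfolding F_def by auto
    qed
  qed
  have "nextpt Y x = m" unfolding nextpt_def
    by (rule cInf_eq_minimum) (use mF mle F_def in auto)
  then show ?thesis using mF mle F_def by auto
qed

locale vac =
  fixes c :: nat and T0 :: "real set" and S :: "nat \<Rightarrow> real set"
  assumes c1: "c \<ge> 1"
    and lfT: "loc_finite T0" and ubT: "unbounded_both T0"
    and lfS: "\<forall>i\<in>{1..c}. loc_finite (S i) \<and> unbounded_both (S i)"
    and dTS: "\<forall>i\<in>{1..c}. T0 \<inter> S i = {}"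
    and dSS: "\<forall>i\<in>{1..c}. \<forall>j\<in>{1..c}. i \<noteq> j \<longrightarrow> S i \<inter> S j = {}"
    and bdd: "\<forall>t. bdd_above (Qv_set c T0 S t)"
begin

abbreviation "Sa \<equiv> Sall c S"
definition "X s t = cnt T0 s t - cnt Sa s t"
definition "Xo s t = cnt_open T0 s t - cnt_open Sa s t"
abbreviation "Q \<equiv> Qv c T0 S"
abbreviation "Ql \<equiv> Qv_left c T0 S"
abbreviation "busy \<equiv> busy_epoch c T0 S"

lemma dS2: "i\<in>{1..c} \<Longrightarrow> j\<in>{1..c} \<Longrightarrow> i\<noteq>j \<Longrightarrow> (S i \<inter> A) \<inter> (S j \<inter> B) = {}"
proof -
  assume "i\<in>{1..c}" "j\<in>{1..c}" "i\<noteq>j"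
  then have "S i \<inter> S j = {}" using dSS by simp
  then show ?thesis by auto
qed

lemma lfSa: "loc_finite Sa"
  unfolding loc_finite_def
proof (intro allI)
  fix a b
  have "Sa \<inter> {a..b} = (\<Union>i\<in>{1..c}. S i \<inter> {a..b})" unfolding Sall_def by auto
  moreover have "finite (\<Union>i\<in>{1..c}. S i \<inter> {a..b})"
    by (intro finite_UN_I) (use lfS in \<open>auto simp: loc_finite_def\<close>)
  ultimately show "finite (Sa \<inter> {a..b})" by simp
qed

lemma T0_Sa: "x \<in> T0 \<Longrightarrow> x \<notin> Sa"
  using dTS unfolding Sall_def by auto

lemma sum_cnt: "(\<Sum>i\<in>{1..c}. cnt (S i) s t) = cnt Sa s t"
proof -
  have "card (Sa \<inter> {s<..t}) = card (\<Union>i\<in>{1..c}. S i \<inter> {s<..t})"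
    unfolding Sall_def by (rule arg_cong[where f=card]) auto
  also have "\<dots> = (\<Sum>i\<in>{1..c}. card (S i \<inter> {s<..t}))"
    apply (rule card_UN_disjoint)
      apply simp
    subgoal using lfS lf_fin by simp
    subgoal by (intro ballI impI dS2) auto
    done
  finally show ?thesis unfolding cnt_def by simp
qed

lemma sum_cnt_open: "(\<Sum>i\<in>{1..c}. cnt_open (S i) s t) = cnt_open Sa s t"
proof -
  have "card (Sa \<inter> {s<..<t}) = card (\<Union>i\<in>{1..c}. S i \<inter> {s<..<t})"
    unfolding Sall_def by (rule arg_cong[where f=card]) auto
  also have "\<dots> = (\<Sum>i\<in>{1..c}. card (S i \<inter> {s<..<t}))"
    apply (rule card_UN_disjoint)
      apply simp
    subgoal using lfS lf_fin_o by simp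
    subgoal by (intro ballI impI dS2) auto
    done
  finally show ?thesis unfolding cnt_open_def by simp
qed

lemma Qset: "Qv_set c T0 S t = {X s t | s. s \<le> t}"
  unfolding Qv_set_def X_def sum_cnt by simp

lemma Qlset: "Ql t = Sup {Xo s t | s. s \<le> t}"
  unfolding Qv_left_def Xo_def sum_cnt_open by simp

lemma Q_ge: "s \<le> t \<Longrightarrow> X s t \<le> Q t"
  unfolding Qv_def using bdd Qset by (intro cSup_upper) auto

lemma Q_le: "(\<And>s. s \<le> t \<Longrightarrow> X s t \<le> M) \<Longrightarrow> Q t \<le> M"
  unfolding Qv_def Qset by (rule cSup_least) auto

lemma Q_nonneg: "0 \<le> Q t"
  using Q_ge[of t t] by (simp add: X_def)

lemma Xo_le: "s \<le> t \<Longrightarrow> Xo s t \<le> Q t + 1"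
proof (cases "s < t")
  case True
  then have "X s t = Xo s t + (if t \<in> T0 then 1 else 0) - (if t \<in> Sa then 1 else 0)"
    unfolding X_def Xo_def using cnt_open_rel[OF lfT True] cnt_open_rel[OF lfSa True] by simp
  moreover assume "s \<le> t"
  ultimately show ?thesis using Q_ge[of s t] by (auto split: if_splits)
next
  case False
  assume "s \<le> t"
  then have "s = t" using False by simp
  then show ?thesis using Q_nonneg[of t] by (simp add: Xo_def)
qed

lemma Ql_bdd: "bdd_above {Xo s t | s. s \<le> t}"
  using Xo_le unfolding bdd_above_def by blast

lemma Ql_ge: "s \<le> t \<Longrightarrow> Xo s t \<le> Ql t"
  unfolding Qlset using Ql_bdd by (intro cSup_upper) auto

lemma Ql_le: "(\<And>s. s \<le> t \<Longrightarrow> Xo s t \<le> M) \<Longrightarrow> Ql t \<le> M"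
  unfolding Qlset by (rule cSup_least) auto

lemma Ql_nonneg: "0 \<le> Ql t"
  using Ql_ge[of t t] by (simp add: Xo_def)

lemma lfU: "loc_finite (T0 \<union> Sa)"
  using lfT lfSa unfolding loc_finite_def by (auto simp: Int_Un_distrib2)

lemma K1: assumes a: "a \<in> T0" shows "Q a = Ql a + 1"
proof (rule antisym)
  have rel: "X s a = Xo s a + 1" if "s < a" for s
    unfolding X_def Xo_def using cnt_open_rel[OF lfT that] cnt_open_rel[OF lfSa that] a T0_Sa[OF a] by simp
  show "Q a \<le> Ql a + 1"
  proof (rule Q_le)
    fix s assume "s \<le> a"
    then show "X s a \<le> Ql a + 1"
      using rel Ql_ge[of s a] Ql_nonneg[of a] by (cases "s < a") (auto simp: X_def)
  qed
  obtain s0 where s0: "s0 < a" "(T0 \<union> Sa) \<inter> {s0<..<a} = {}" using gap_exists[OF lfU] by blast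
  have "T0 \<inter> {s0<..<a} = {}" "Sa \<inter> {s0<..<a} = {}" using s0(2) by auto
  then have "Xo s0 a = 0" unfolding Xo_def cnt_open_def by simp
  then have Q1: "1 \<le> Q a" using rel[OF s0(1)] Q_ge[of s0 a] s0 by simp
  show "Ql a + 1 \<le> Q a"
  proof -
    have "Ql a \<le> Q a - 1"
    proof (rule Ql_le)
      fix s assume "s \<le> a"
      then show "Xo s a \<le> Q a - 1"
        using rel Q_ge[of s a] Q1 by (cases "s < a") (auto simp: Xo_def)
    qed
    then show ?thesis by simp
  qed
qed

lemma K2: "a \<le> x \<Longrightarrow> Q a + X a x \<le> Q x"
proof -
  assume ax: "a \<le> x"
  have "Q a \<le> Q x - X a x"
  proof (rule Q_le)
    fix s assume "s \<le> a"
    then have "X s x = X s a + X a x" unfolding X_def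
      using cnt_split[OF lfT, of s a x] cnt_split[OF lfSa, of s a x] ax by simp
    then show "X s a \<le> Q x - X a x" using Q_ge[of s x] \<open>s \<le> a\<close> ax by simp
  qed
  then show ?thesis by simp
qed

lemma K3: "a < y \<Longrightarrow> Q a + Xo a y \<le> Ql y"
proof -
  assume ay: "a < y"
  have "Q a \<le> Ql y - Xo a y"
  proof (rule Q_le)
    fix s assume "s \<le> a"
    then have "Xo s y = X s a + Xo a y" unfolding X_def Xo_def
      using cnt_open_split[OF lfT, of s a y] cnt_open_split[OF lfSa, of s a y] ay by simp
    then show "X s a \<le> Ql y - Xo a y" using Ql_ge[of s y] \<open>s \<le> a\<close> ay by simp
  qed
  then show ?thesis by simp
qed

lemma K5: assumes ax: "a \<le> x" and m1: "Q a + X a x \<le> M" and m2: "cnt T0 a x \<le> M"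
  shows "Q x \<le> M"
proof (rule Q_le)
  fix s assume sx: "s \<le> x"
  show "X s x \<le> M"
  proof (cases "s \<le> a")
    case True
    then have "X s x = X s a + X a x" unfolding X_def
      using cnt_split[OF lfT, of s a x] cnt_split[OF lfSa, of s a x] ax by simp
    then show ?thesis using Q_ge[of s a] True m1 by simp
  next
    case False
    then have "X s x \<le> cnt T0 a x" unfolding X_def
      using cnt_mono_left[OF lfT, of a s x] cnt_nonneg[of Sa s x] by simp
    then show ?thesis using m2 by simp
  qed
qed


definition "Bs a x = {y. a < y \<and> y \<le> x \<and> busy y}"
definition "Bc a x = card (Bs a x)"
definition "nn a = nat (Ql a) + 1"
abbreviation "dep \<equiv> dep_epoch c T0 S"

lemma busy_Sa: "busy y \<Longrightarrow> y \<in> Sa" unfolding busy_epoch_def by simp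

lemma Bs_fin: "finite (Bs a x)"
  using lf_fin[OF lfSa, of a x] unfolding Bs_def
  by (rule finite_subset[rotated]) (auto dest: busy_Sa)

lemma Bc_mono: "x \<le> x' \<Longrightarrow> Bc a x \<le> Bc a x'"
  unfolding Bc_def using Bs_fin by (intro card_mono) (auto simp: Bs_def)

lemma Bc_strict: "x < x' \<Longrightarrow> busy x' \<Longrightarrow> a < x' \<Longrightarrow> Bc a x < Bc a x'"
  unfolding Bc_def
proof (rule psubset_card_mono[OF Bs_fin])
  assume "x < x'" "busy x'" "a < x'"
  then have "x' \<in> Bs a x'" "x' \<notin> Bs a x" by (auto simp: Bs_def)
  moreover have "Bs a x \<subseteq> Bs a x'" using \<open>x < x'\<close> by (auto simp: Bs_def)
  ultimately show "Bs a x \<subset> Bs a x'" by blast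
qed

lemma nn_int: "int (nn a) = Ql a + 1"
  unfolding nn_def using Ql_nonneg[of a] by simp

lemma L: assumes a: "a \<in> T0" and ax: "a \<le> x" and B: "int (Bc a x) \<le> Ql a"
  shows "\<forall>y\<in>Sa. a < y \<and> y \<le> x \<longrightarrow> busy y"
proof (rule ccontr)
  assume nt: "\<not> ?thesis"
  define N where "N = {y\<in>Sa. a < y \<and> y \<le> x \<and> \<not> busy y}"
  have finN: "finite N" using lf_fin[OF lfSa, of a x] unfolding N_def
    by (rule finite_subset[rotated]) auto
  have neN: "N \<noteq> {}" using nt unfolding N_def by auto
  define m where "m = Min N"
  have mN: "m \<in> N" unfolding m_def using finN neN by simp
  have sub: "Sa \<inter> {a<..<m} \<subseteq> Bs a x"
  proof
    fix y assume y: "y \<in> Sa \<inter> {a<..<m}"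
    have "busy y"
    proof (rule ccontr)
      assume "\<not> busy y"
      then have "y \<in> N" using y mN unfolding N_def by auto
      then have "m \<le> y" unfolding m_def using finN by simp
      then show False using y by auto
    qed
    then show "y \<in> Bs a x" using y mN unfolding Bs_def N_def by auto
  qed
  have "cnt_open Sa a m \<le> int (Bc a x)"
    unfolding cnt_open_def Bc_def using card_mono[OF Bs_fin sub] by simp
  moreover have "Q a + Xo a m \<le> Ql m" using K3[of a m] mN unfolding N_def by simp
  moreover have "Q a = Ql a + 1" using K1[OF a] .
  ultimately have "1 \<le> Ql m" using B cnt_open_nonneg[of T0 a m] unfolding Xo_def by linarith
  then have "busy m" using mN unfolding N_def busy_epoch_def by simp
  then show False using mN unfolding N_def by simp
qed

lemma Lcor: assumes a: "a \<in> T0" and ax: "a \<le> x" and B: "int (Bc a x) \<le> Ql a"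
  shows "cnt Sa a x = int (Bc a x)"
proof -
  have "Sa \<inter> {a<..x} = Bs a x" using L[OF a ax B] unfolding Bs_def by (auto dest: busy_Sa)
  then show ?thesis unfolding cnt_def Bc_def by simp
qed

lemma many_pts: "\<exists>x0\<ge>a. k \<le> card (Sa \<inter> {a<..x0})"
proof (induction k)
  case 0 then show ?case by auto
next
  case (Suc k)
  then obtain x0 where x0: "x0 \<ge> a" "k \<le> card (Sa \<inter> {a<..x0})" by blast
  have "1 \<in> {1..c}" using c1 by simp
  then obtain y where y: "y \<in> S 1" "x0 < y" using lfS unfolding unbounded_both_def by blast
  have ySa: "y \<in> Sa" using y \<open>1 \<in> {1..c}\<close> unfolding Sall_def by blast
  have "y \<in> Sa \<inter> {a<..y}" "y \<notin> Sa \<inter> {a<..x0}" "Sa \<inter> {a<..x0} \<subseteq> Sa \<inter> {a<..y}"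
    using y ySa x0 by auto
  then have "Sa \<inter> {a<..x0} \<subset> Sa \<inter> {a<..y}" by blast
  then have "card (Sa \<inter> {a<..x0}) < card (Sa \<inter> {a<..y})"
    by (rule psubset_card_mono[OF lf_fin[OF lfSa]])
  then show ?case using x0 y by (intro exI[of _ y]) auto
qed

definition "Pd a x \<longleftrightarrow> a < x \<and> busy x \<and> card {y. a < y \<and> y \<le> x \<and> busy y} = nn a"

lemma Pd_unique: "Pd a x \<Longrightarrow> Pd a x' \<Longrightarrow> x = x'"
proof -
  have *: False if "Pd a x" "Pd a x'" "x < x'" for x x'
    using Bc_strict[of x x' a] that unfolding Pd_def Bc_def Bs_def by simp
  assume "Pd a x" "Pd a x'"
  then show ?thesis using *[of x x'] *[of x' x] by (meson linorder_neqE)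
qed

lemma Pd_exists: assumes a: "a \<in> T0" shows "\<exists>x. Pd a x"
proof -
  obtain x0 where x0: "x0 \<ge> a" "nn a \<le> card (Sa \<inter> {a<..x0})" using many_pts by blast
  have B0: "nn a \<le> Bc a x0"
  proof (rule ccontr)
    assume "\<not> nn a \<le> Bc a x0"
    then have "int (Bc a x0) \<le> Ql a" using nn_int[of a] by linarith
    then have "cnt Sa a x0 = int (Bc a x0)" using Lcor[OF a x0(1)] by simp
    then show False using x0(2) \<open>\<not> nn a \<le> Bc a x0\<close> unfolding cnt_def by simp
  qed
  define F where "F = {x\<in>Bs a x0. nn a \<le> Bc a x}"
  have finF: "finite F" using Bs_fin unfolding F_def by simp
  have neBs: "Bs a x0 \<noteq> {}" using B0 unfolding Bc_def nn_def by auto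
  define M where "M = Max (Bs a x0)"
  have MB: "M \<in> Bs a x0" unfolding M_def using Bs_fin neBs by simp
  have "Bs a M = Bs a x0"
  proof
    show "Bs a M \<subseteq> Bs a x0" using MB unfolding Bs_def by auto
    show "Bs a x0 \<subseteq> Bs a M"
    proof
      fix y assume y: "y \<in> Bs a x0"
      then have "y \<le> M" unfolding M_def using Bs_fin by simp
      then show "y \<in> Bs a M" using y unfolding Bs_def by simp
    qed
  qed
  then have "M \<in> F" using MB B0 unfolding F_def Bc_def by simp
  then have neF: "F \<noteq> {}" by auto
  define m where "m = Min F"
  have mF: "m \<in> F" unfolding m_def using finF neF by simp
  have mmin: "\<forall>x\<in>F. m \<le> x" unfolding m_def using finF by simp
  have mbusy: "a < m" "busy m" "m \<le> x0" using mF unfolding F_def Bs_def by auto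
  define Bo where "Bo = {y. a < y \<and> y < m \<and> busy y}"
  have BsBo: "Bs a m = insert m Bo" using mbusy unfolding Bs_def Bo_def by auto
  have finBo: "finite Bo" by (rule finite_subset[OF _ Bs_fin[of a m]]) (use BsBo in blast)
  have "card Bo < nn a"
  proof (rule ccontr)
    assume "\<not> card Bo < nn a"
    then have neBo: "Bo \<noteq> {}" using nn_def by auto
    define m' where "m' = Max Bo"
    have m'B: "m' \<in> Bo" unfolding m'_def using finBo neBo by simp
    have "Bs a m' = Bo"
    proof
      show "Bs a m' \<subseteq> Bo" using m'B unfolding Bs_def Bo_def by auto
      show "Bo \<subseteq> Bs a m'"
      proof
        fix y assume y: "y \<in> Bo"
        then have "y \<le> m'" unfolding m'_def using finBo by simp
        then show "y \<in> Bs a m'" using y unfolding Bs_def Bo_def by simp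
      qed
    qed
    then have "nn a \<le> Bc a m'" using \<open>\<not> card Bo < nn a\<close> unfolding Bc_def by simp
    moreover have "m' \<in> Bs a x0" using m'B mbusy unfolding Bo_def Bs_def by simp
    ultimately have "m' \<in> F" unfolding F_def by simp
    then have "m \<le> m'" using mmin by simp
    then show False using m'B unfolding Bo_def by simp
  qed
  then have "Bc a m = nn a" using mF BsBo finBo unfolding F_def Bc_def
    by (simp add: card_insert_if Bo_def)
  then show ?thesis using mbusy unfolding Pd_def Bc_def Bs_def by auto
qed

lemma dep_Pd: "a \<in> T0 \<Longrightarrow> Pd a (dep a)"
proof -
  assume a: "a \<in> T0"
  obtain x where x: "Pd a x" using Pd_exists[OF a] by blast
  have "dep a = x" unfolding dep_epoch_def
    apply (rule the_equality)
    subgoal using x unfolding Pd_def nn_def by simp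
    subgoal for y using Pd_unique[OF x, of y] unfolding Pd_def nn_def by simp
    done
  then show ?thesis using x by simp
qed

lemma dep_props: "a \<in> T0 \<Longrightarrow> a < dep a \<and> busy (dep a) \<and> Bc a (dep a) = nn a"
  using dep_Pd unfolding Pd_def Bc_def Bs_def by auto


lemma dep_gt: "a \<in> T0 \<Longrightarrow> x < dep a \<Longrightarrow> Bc a x < nn a"
  using dep_props Bc_strict by metis

lemma dep_le: "a \<in> T0 \<Longrightarrow> x \<le> dep a \<Longrightarrow> Bc a x \<le> nn a"
  using dep_props Bc_mono by metis

lemma Bc_split: "a \<le> b \<Longrightarrow> b \<le> x \<Longrightarrow> Bc a x = Bc a b + Bc b x"
proof -
  assume "a \<le> b" "b \<le> x"
  then have "Bs a x = Bs a b \<union> Bs b x" "Bs a b \<inter> Bs b x = {}" unfolding Bs_def by auto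
  then show ?thesis unfolding Bc_def using Bs_fin by (simp add: card_Un_disjoint)
qed

lemma nn_pos: "1 \<le> nn a" unfolding nn_def by simp

lemma F3: assumes a: "a \<in> T0" and a': "a' \<in> T0" and aa: "a < a'" shows "dep a < dep a'"
proof (rule ccontr)
  assume "\<not> dep a < dep a'"
  then have dd: "dep a' \<le> dep a" by simp
  have "Bc a (dep a') = Bc a a' + Bc a' (dep a')"
    using Bc_split[of a a' "dep a'"] aa dep_props[OF a'] by simp
  also have "Bc a' (dep a') = nn a'" using dep_props[OF a'] by simp
  finally have eq: "Bc a (dep a') = Bc a a' + nn a'" .
  have "Bc a (dep a') \<le> nn a" using dep_le[OF a dd] .
  then have B: "int (Bc a a') \<le> Ql a" using eq nn_pos[of a'] nn_int[of a] by linarith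
  have c1: "cnt Sa a a' = int (Bc a a')" using Lcor[OF a _ B] aa by simp
  have "cnt_open Sa a a' = cnt Sa a a'" using cnt_open_rel[OF lfSa aa] T0_Sa[OF a'] by simp
  moreover have "Q a + Xo a a' \<le> Ql a'" using K3[OF aa] .
  moreover have "Q a = Ql a + 1" using K1[OF a] .
  ultimately have "Ql a + 1 - int (Bc a a') \<le> Ql a'"
    using c1 cnt_open_nonneg[of T0 a a'] unfolding Xo_def by linarith
  then have "int (nn a) + 1 \<le> int (Bc a (dep a'))" using eq nn_int[of a] nn_int[of a'] by linarith
  then show False using \<open>Bc a (dep a') \<le> nn a\<close> by linarith
qed

lemma F4: assumes a: "a \<in> T0" and au: "a \<le> u" and cq: "card (T0 \<inter> {a..u}) \<le> nat (Q u)"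
  shows "u < dep a"
proof (rule ccontr)
  assume "\<not> u < dep a"
  then have du: "dep a \<le> u" by simp
  define d where "d = dep a"
  have ad: "a < d" using dep_props[OF a] d_def by simp
  have "Bs a d \<subseteq> Sa \<inter> {a<..d}" unfolding Bs_def by (auto dest: busy_Sa)
  then have "int (Bc a d) \<le> cnt Sa a d" unfolding Bc_def cnt_def using lf_fin[OF lfSa]
    by (simp add: card_mono)
  moreover have "int (Bc a d) = Q a" using dep_props[OF a] d_def nn_int[of a] K1[OF a] by simp
  ultimately have "Q a + X a d \<le> cnt T0 a d" unfolding X_def by simp
  then have Qd: "Q d \<le> cnt T0 a d" using K5[of a d "cnt T0 a d"] ad by simp
  have "Q u \<le> Q d + cnt T0 d u"
    apply (rule K5)
    using du d_def Q_nonneg[of d] cnt_nonneg[of Sa d u] by (auto simp: X_def)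
  also have "\<dots> \<le> cnt T0 a u" using Qd cnt_split[OF lfT, of a d u] ad du d_def by simp
  finally have Qu: "Q u \<le> cnt T0 a u" .
  have "T0 \<inter> {a..u} = insert a (T0 \<inter> {a<..u})" using a au by auto
  then have "card (T0 \<inter> {a..u}) = cnt T0 a u + 1" unfolding cnt_def using lf_fin[OF lfT] by simp
  then show False using cq Qu Q_nonneg[of u] by linarith
qed

lemma F5: assumes L: "L \<subseteq> T0" "finite L" "\<forall>a\<in>L. a \<le> t"
  shows "int (card {a\<in>L. t < dep a}) \<le> Q t"
proof (cases "{a\<in>L. t < dep a} = {}")
  case True then show ?thesis using Q_nonneg[of t] by (simp only: card.empty of_nat_0)
next
  case False
  define a0 where "a0 = Min {a\<in>L. t < dep a}"
  have fin: "finite {a\<in>L. t < dep a}" using L by simp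
  have a0: "a0 \<in> L" "t < dep a0" using Min_in[OF fin False] a0_def by auto
  have a0T: "a0 \<in> T0" using a0 L by auto
  have a0t: "a0 \<le> t" using a0 L by auto
  have B: "int (Bc a0 t) \<le> Ql a0" using dep_gt[OF a0T a0(2)] nn_int[of a0] by linarith
  have cS: "cnt Sa a0 t = int (Bc a0 t)" using Lcor[OF a0T a0t B] .
  have "Q a0 + X a0 t \<le> Q t" using K2[OF a0t] .
  then have Qt: "1 + cnt T0 a0 t \<le> Q t" using K1[OF a0T] cS B unfolding X_def by linarith
  have "{a\<in>L. t < dep a} \<subseteq> insert a0 (T0 \<inter> {a0<..t})"
  proof
    fix a assume a: "a \<in> {a\<in>L. t < dep a}"
    then have "a0 \<le> a" unfolding a0_def using fin by simp
    then show "a \<in> insert a0 (T0 \<inter> {a0<..t})" using a L by auto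
  qed
  then have "card {a\<in>L. t < dep a} \<le> card (insert a0 (T0 \<inter> {a0<..t}))"
    using lf_fin[OF lfT] by (intro card_mono) auto
  also have "\<dots> \<le> card (T0 \<inter> {a0<..t}) + 1" using lf_fin[OF lfT] by (simp add: card_insert_if)
  finally show ?thesis using Qt unfolding cnt_def by linarith
qed

definition "srv a = (THE i. i \<in> {1..c} \<and> dep a \<in> S i)"

lemma srv_props: assumes a: "a \<in> T0"
  shows "srv a \<in> {1..c} \<and> dep a \<in> S (srv a) \<and> svc_time c T0 S a = nextpt (S (srv a)) (dep a) - dep a"
proof -
  have "dep a \<in> Sa" using dep_props[OF a] busy_Sa by simp
  then obtain i where i: "i \<in> {1..c}" "dep a \<in> S i" unfolding Sall_def by auto
  have uq: "j = i" if "j \<in> {1..c} \<and> dep a \<in> S j" for j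
  proof (rule ccontr)
    assume "j \<noteq> i"
    then have "(S j \<inter> UNIV) \<inter> (S i \<inter> UNIV) = {}" using dS2[of j i UNIV UNIV] that i by blast
    then show False using that i by auto
  qed
  have "srv a = i" unfolding srv_def by (rule the_equality) (use i uq in auto)
  then show ?thesis using i unfolding svc_time_def srv_def Let_def by simp
qed

end



lemma many_below: assumes lf: "loc_finite Y" and ub: "unbounded_both Y"
  shows "\<exists>b\<le>u. k \<le> card (Y \<inter> {b..u})"
proof (induction k)
  case 0 then show ?case by auto
next
  case (Suc k)
  then obtain b where b: "b \<le> u" "k \<le> card (Y \<inter> {b..u})" by blast
  obtain y where y: "y \<in> Y" "y < b" using ub unfolding unbounded_both_def by blast
  have "y \<in> Y \<inter> {y..u}" "y \<notin> Y \<inter> {b..u}" "Y \<inter> {b..u} \<subseteq> Y \<inter> {y..u}"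
    using y b by auto
  then have "Y \<inter> {b..u} \<subset> Y \<inter> {y..u}" by blast
  then have "card (Y \<inter> {b..u}) < card (Y \<inter> {y..u})"
    by (rule psubset_card_mono[OF lf_fin_c[OF lf]])
  then show ?case using b y by (intro exI[of _ y]) auto
qed

lemma sorted_plus: "sorted xs \<Longrightarrow> sorted (map (\<lambda>x. (u::real) + x) xs)"
  by (induction xs) auto

theorem lemma3:
  fixes c :: nat and T0 :: "real set" and S :: "nat \<Rightarrow> real set" and u :: real
  assumes "c \<ge> 1"
    and "loc_finite T0" and "unbounded_both T0"
    and "\<forall>i\<in>{1..c}. loc_finite (S i) \<and> unbounded_both (S i)"
    and "\<forall>i\<in>{1..c}. T0 \<inter> S i = {}"
    and "\<forall>i\<in>{1..c}. \<forall>j\<in>{1..c}. i \<noteq> j \<longrightarrow> S i \<inter> S j = {}"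
    and "\<forall>t. bdd_above (Qv_set c T0 S t)"
  defines "q \<equiv> nat (Qv c T0 S u)"
    and "r \<equiv> sort (map (\<lambda>i. resid (S i) u) [1..<c+1])"
    and "e \<equiv> u - Sup {a \<in> T0. a \<le> u}"
  shows "\<forall>t\<ge>u.
           Qu c T0 S u (t - u) (0, replicate c 0, e) \<le> Qu c T0 S u (t - u) (q, r, e)
         \<and> int (Qu c T0 S u (t - u) (q, r, e)) \<le> Qv c T0 S t"
proof (intro allI impI)
  interpret vac c T0 S using assms(1-7) by unfold_locales
  fix t assume tu: "u \<le> t"
  define N where "N = (\<lambda>i x. nextpt (S i) x)"
  have Np: "\<forall>i\<in>{1..c}. \<forall>x. N i x \<in> S i \<and> x < N i x \<and> (\<forall>y\<in>S i. x < y \<longrightarrow> N i x \<le> y)"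
    using nextpt_props lfS unfolding N_def by blast
  have Ngt: "\<forall>i\<in>{1..c}. \<forall>x. x < N i x" using Np by blast
  have Nmin: "\<forall>i\<in>{1..c}. \<forall>x y. y \<in> S i \<longrightarrow> x < y \<longrightarrow> N i x \<le> y" using Np by blast
  have Nmono: "\<forall>i\<in>{1..c}. \<forall>x y. x \<le> y \<longrightarrow> N i x \<le> N i y"
  proof (intro ballI allI impI)
    fix i and x y :: real assume i: "i \<in> {1..c}" and xy: "x \<le> y"
    then show "N i x \<le> N i y" using Np[rule_format, OF i, of y] Np[rule_format, OF i, of x] by force
  qed
  define svc where "svc = svc_time c T0 S"
  define Wset where "Wset = {a \<in> T0. a \<le> u \<and> card (T0 \<inter> {a..u}) \<le> q}"
  define Aset where "Aset = T0 \<inter> {u<..t}"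
  define WL where "WL = sorted_list_of_set Wset"
  define AL where "AL = sorted_list_of_set Aset"
  have finW: "finite Wset"
  proof -
    obtain b where b: "b \<le> u" "q + 1 \<le> card (T0 \<inter> {b..u})" using many_below[OF lfT ubT] by blast
    have "Wset \<subseteq> T0 \<inter> {b..u}"
    proof
      fix a assume a: "a \<in> Wset"
      have "b \<le> a"
      proof (rule ccontr)
        assume "\<not> b \<le> a"
        then have "T0 \<inter> {b..u} \<subseteq> T0 \<inter> {a..u}" by auto
        then have "card (T0 \<inter> {b..u}) \<le> card (T0 \<inter> {a..u})"
          by (rule card_mono[OF lf_fin_c[OF lfT]])
        then show False using a b unfolding Wset_def by simp
      qed
      then show "a \<in> T0 \<inter> {b..u}" using a unfolding Wset_def by auto
    qed
    then show ?thesis using lf_fin_c[OF lfT] finite_subset by blast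
  qed
  have finA: "finite Aset" unfolding Aset_def using lf_fin[OF lfT] by simp
  have setWL: "set WL = Wset" unfolding WL_def using finW by simp
  have setAL: "set AL = Aset" unfolding AL_def using finA by simp
  define LL where "LL = WL @ AL"
  define bb where "bb = (\<lambda>a::real. if a \<le> u then u else a)"
  have csW: "map (\<lambda>a. (u, svc a)) WL = map (\<lambda>a. (bb a, svc a)) WL"
    using setWL unfolding Wset_def bb_def by (auto intro!: map_cong)
  have csA: "map (\<lambda>a. (a, svc a)) AL = map (\<lambda>a. (bb a, svc a)) AL"
    using setAL unfolding Aset_def bb_def by (auto intro!: map_cong)
  have LT0: "set LL \<subseteq> T0" unfolding LL_def using setWL setAL Wset_def Aset_def by auto
  have depu: "\<forall>a\<in>set LL. u < dep a"
  proof
    fix a assume a: "a \<in> set LL"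
    show "u < dep a"
    proof (cases "a \<in> Wset")
      case True
      then show ?thesis using F4[of a u] unfolding Wset_def q_def by auto
    next
      case False
      then have "a \<in> Aset" using a setWL setAL unfolding LL_def by auto
      then show ?thesis using dep_props[of a] unfolding Aset_def by force
    qed
  qed
  have sLL: "sorted_wrt (<) LL" unfolding LL_def WL_def AL_def
      using strict_sorted_list_of_set finW finA
      by (auto simp: sorted_wrt_append Wset_def Aset_def)
  have srt: "sorted_wrt (<) (u # map dep LL)"
  proof -
    from sLL have "sorted_wrt (<) (map dep LL)"
      by (rule sorted_wrt_map_mono) (use F3 LT0 in blast)
    then show ?thesis using depu by simp
  qed
  have props: "\<forall>a\<in>set LL. bb a \<le> dep a \<and> srv a \<in> {1..c} \<and> dep a \<in> S (srv a) \<and>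
      svc a = N (srv a) (dep a) - dep a"
  proof
    fix a assume a: "a \<in> set LL"
    then have aT: "a \<in> T0" using LT0 by auto
    show "bb a \<le> dep a \<and> srv a \<in> {1..c} \<and> dep a \<in> S (srv a) \<and> svc a = N (srv a) (dep a) - dep a"
      using srv_props[OF aT] dep_props[OF aT] depu a unfolding bb_def svc_def N_def by auto
  qed
  have svc_pos: "\<forall>a\<in>set LL. 0 \<le> svc a" using props Ngt by (metis diff_ge_0_iff_ge less_le)
  define Wp where "Wp = map (\<lambda>x. u + x) r"
  have Wp_eq: "cg x Wp = cg x (map (\<lambda>i. N i u) [1..<c+1])" for x
  proof -
    have "cg x Wp = length (filter (\<lambda>w. x < w) (map (\<lambda>x. u + x) r))" unfolding cg_def Wp_def ..
    also have "\<dots> = length (filter (\<lambda>w. x < u + w) r)" by (simp add: filter_map o_def)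
    also have "\<dots> = length (filter (\<lambda>w. x < u + w) (map (\<lambda>i. resid (S i) u) [1..<c+1]))"
      unfolding r_def filter_sort length_sort ..
    also have "\<dots> = cg x (map (\<lambda>i. N i u) [1..<c+1])"
      unfolding cg_def resid_def N_def by (simp add: filter_map o_def)
    finally show ?thesis .
  qed
  have Wp_len: "length Wp = c" unfolding Wp_def r_def by simp
  have Wp_sorted: "sorted Wp" unfolding Wp_def r_def by (intro sorted_plus) simp
  have Wp_ge: "\<forall>w\<in>set Wp. u \<le> w"
  proof
    fix w assume "w \<in> set Wp"
    then have "w \<in> (\<lambda>i. N i u) ` set [1..<c+1]" unfolding Wp_def r_def resid_def N_def by auto
    then obtain i where "i \<in> set [1..<c+1]" "w = N i u" by blast
    then have i: "i \<in> {1..c}" "w = N i u" by auto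
    have "u < N i u" using Ngt i(1) by blast
    then show "u \<le> w" using i(2) by simp
  qed
  have Qplus: "Qu c T0 S u (t - u) (q, r, e) = length (filter (\<lambda>s. t < s) (fcfs_starts Wp (map (\<lambda>a. (bb a, svc a)) LL)))"
    unfolding Qu_def Wp_def svc_def[symmetric] LL_def
    by (simp add: Let_def Wset_def[symmetric] WL_def[symmetric] Aset_def[symmetric] AL_def[symmetric] csW csA)
  have G: "list_all2 (\<le>) (fcfs_starts Wp (map (\<lambda>a. (bb a, svc a)) LL)) (map dep LL)"
    by (rule fcfs_G2[OF c1 Ngt Nmin Nmono Wp_sorted Wp_len _ srt props]) (use Wp_eq in simp)
  have "int (Qu c T0 S u (t - u) (q, r, e)) \<le> int (length (filter (\<lambda>s. t < s) (map dep LL)))"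
    using list_all2_cnt[OF G] Qplus by simp
  also have "length (filter (\<lambda>s. t < s) (map dep LL)) = card {a\<in>set LL. t < dep a}"
  proof -
    have "distinct LL" using sLL strict_sorted_iff by blast
    then have "length (filter (\<lambda>a. t < dep a) LL) = card ({a. t < dep a} \<inter> set LL)"
      by (rule distinct_length_filter)
    moreover have "{a. t < dep a} \<inter> set LL = {a\<in>set LL. t < dep a}" by blast
    ultimately show ?thesis by (simp add: filter_map o_def)
  qed
  also have "int \<dots> \<le> Q t"
  proof (rule F5)
    show "set LL \<subseteq> T0" by (rule LT0)
    show "finite (set LL)" by simp
    show "\<forall>a\<in>set LL. a \<le> t"
    proof
      fix a assume "a \<in> set LL"
      then have "a \<in> Wset \<or> a \<in> Aset" using setWL setAL unfolding LL_def by auto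
      then show "a \<le> t" using tu unfolding Wset_def Aset_def by auto
    qed
  qed
  finally have claim2: "int (Qu c T0 S u (t - u) (q, r, e)) \<le> Q t" .
  have W0: "{a \<in> T0. a \<le> u \<and> card (T0 \<inter> {a..u}) = 0} = {}"
  proof -
    have "card (T0 \<inter> {a..u}) \<noteq> 0" if "a \<in> T0" "a \<le> u" for a
      using that lf_fin_c[OF lfT, of a u] by (auto simp: card_eq_0_iff)
    then show ?thesis by auto
  qed
  define csW' where "csW' = map (\<lambda>a. (bb a, svc a)) WL"
  define csA' where "csA' = map (\<lambda>a. (bb a, svc a)) AL"
  have Qminus: "Qu c T0 S u (t - u) (0, replicate c 0, e) = length (filter (\<lambda>s. t < s) (fcfs_starts (replicate c u) csA'))"
    unfolding Qu_def svc_def[symmetric] csA'_def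
    by (simp add: Let_def W0 Aset_def[symmetric] AL_def[symmetric] csA map_replicate_const)
  define W' where "W' = fcfs_state Wp csW'"
  have inv: "sorted W' \<and> length W' = length Wp \<and> (\<forall>w\<in>set W'. u \<le> w)"
    unfolding W'_def
    apply (rule fcfs_state_inv)
    using Wp_len c1 Wp_sorted Wp_ge svc_pos setWL unfolding csW'_def LL_def Wset_def bb_def by auto
  have M: "list_all2 (\<le>) (fcfs_starts (replicate c u) csA') (fcfs_starts W' csA')"
  proof (rule fcfs_mono)
    show "sorted (replicate c u)" by simp
    show "sorted W'" using inv by simp
    show "length (replicate c u) = length W'" using inv Wp_len by simp
    show "replicate c u \<noteq> []" using c1 by simp
    show "\<forall>x. cg x (replicate c u) \<le> cg x W'"
    proof
      fix x
      show "cg x (replicate c u) \<le> cg x W'"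
      proof (cases "x < u")
        case True
        then have "cg x W' = length W'" using inv by (intro cg_all) force
        then show ?thesis using inv Wp_len cg_le_len[of x "replicate c u"] by simp
      next
        case False
        then show ?thesis unfolding cg_def by simp
      qed
    qed
    show "\<forall>p\<in>set csA'. 0 \<le> snd p" using svc_pos setAL unfolding csA'_def LL_def by auto
  qed
  have "fcfs_starts Wp (map (\<lambda>a. (bb a, svc a)) LL) = fcfs_starts Wp csW' @ fcfs_starts W' csA'"
    unfolding LL_def csW'_def csA'_def W'_def by (simp add: fcfs_append)
  then have "Qu c T0 S u (t - u) (q, r, e) \<ge> length (filter (\<lambda>s. t < s) (fcfs_starts W' csA'))"
    using Qplus by simp
  then have claim1: "Qu c T0 S u (t - u) (0, replicate c 0, e) \<le> Qu c T0 S u (t - u) (q, r, e)"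
    using Qminus list_all2_cnt[OF M, of t] by linarith
  show "Qu c T0 S u (t - u) (0, replicate c 0, e) \<le> Qu c T0 S u (t - u) (q, r, e)
         \<and> int (Qu c T0 S u (t - u) (q, r, e)) \<le> Qv c T0 S t"
    using claim1 claim2 by simp
qed


end
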